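(* Let $i\ge 0$ and let $K$ be a pure $(i+1)$-dimensional simplicial complex on $n$ vertices that contains every $(i+1)$-element subset of $V(K)$ as an $i$-face. Then $$|S_{i+1}(K)|\le \frac{\mathfrak{q}_i(K)\binom{n}{i+1}}{(i+2)^2}.$$
   Context: A (finite abstract) simplicial complex $K$ on a finite vertex set $V(K)$ is a family of subsets of $V(K)$ closed under taking subsets and containing every singleton $\{v\}$, $v\in V(K)$; $K$ is on $n$ vertices if $|V(K)|=n$. An $i$-face is a member of $K$ of cardinality $i+1$, and $S_i(K)$ is the set of $i$-faces. The dimension of $K$ is the largest dimension of a face; facets are inclusion-maximal faces; $K$ is pure if all facets have the same dimension. For an $i$-face $F$, $d_K(F)$ is the number of $(i+1)$-faces of $K$ containing $F$. Two distinct $i$-faces are up-neighbors if their union is an $(i+1)$-face of $K$. The $i$-th signless up Laplacian $Q_i^{\mathrm{up}}(K)$ is the operator on $\mathbb{R}^{S_i(K)}$ given by $(Q_i^{\mathrm{up}}(K)f)(F)=d_K(F)f(F)+\sum_{F'\text{ up-neighbor of }F}f(F')$; equivalently $Q_i^{\mathrm{up}}(K)=\bar\partial_{i+1}\bar\partial_{i+1}^{T}$, where $\bar\partial_{i+1}$ is the $0/1$ matrix with rows indexed by $S_i(K)$, columns by $S_{i+1}(K)$, and entry $1$ iff the $i$-face is contained in the $(i+1)$-face. It is symmetric, nonnegative and positive semidefinite; $\mathfrak{q}_i(K)$ denotes its largest eigenvalue (its spectral radius). *)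

theory Defs
  imports Complex_Main
begin

definition simplicial_complex :: "'a set \<Rightarrow> 'a set set \<Rightarrow> bool" where
  "simplicial_complex V K \<longleftrightarrow> finite V \<and> K \<subseteq> Pow V
     \<and> (\<forall>F\<in>K. \<forall>G. G \<subseteq> F \<longrightarrow> G \<in> K) \<and> (\<forall>v\<in>V. {v} \<in> K)"

definition faces :: "'a set set \<Rightarrow> nat \<Rightarrow> 'a set set" where
  "faces K i = {F \<in> K. card F = i + 1}"

definition facets :: "'a set set \<Rightarrow> 'a set set" where
  "facets K = {F \<in> K. \<forall>G\<in>K. F \<subseteq> G \<longrightarrow> G = F}"

definition complex_dim :: "'a set set \<Rightarrow> nat" where
  "complex_dim K = Max ((\<lambda>F. card F - 1) ` K)"

definition pure_of_dim :: "'a set set \<Rightarrow> nat \<Rightarrow> bool" where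
  "pure_of_dim K d \<longleftrightarrow> (\<exists>F\<in>K. card F = d + 1) \<and> complex_dim K = d
     \<and> (\<forall>F\<in>facets K. card F = d + 1)"

definition updeg :: "'a set set \<Rightarrow> nat \<Rightarrow> 'a set \<Rightarrow> nat" where
  "updeg K i F = card {G \<in> faces K (i + 1). F \<subseteq> G}"

definition up_neighbors :: "'a set set \<Rightarrow> nat \<Rightarrow> 'a set \<Rightarrow> 'a set set" where
  "up_neighbors K i F = {F' \<in> faces K i. F' \<noteq> F \<and> F \<union> F' \<in> faces K (i + 1)}"

definition signless_up_laplacian ::
    "'a set set \<Rightarrow> nat \<Rightarrow> ('a set \<Rightarrow> real) \<Rightarrow> 'a set \<Rightarrow> real" where
  "signless_up_laplacian K i f F =
     real (updeg K i F) * f F + (\<Sum>F'\<in>up_neighbors K i F. f F')"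

definition up_eigenvalues :: "'a set set \<Rightarrow> nat \<Rightarrow> real set" where
  "up_eigenvalues K i = {\<mu>. \<exists>f. (\<exists>F\<in>faces K i. f F \<noteq> 0)
      \<and> (\<forall>F\<in>faces K i. signless_up_laplacian K i f F = \<mu> * f F)}"

definition q_up :: "'a set set \<Rightarrow> nat \<Rightarrow> real" where
  "q_up K i = Max (up_eigenvalues K i)"

end

theory Submission imports Defs "HOL-Analysis.Function_Topology" "Jordan_Normal_Form.Spectral_Radius" begin

definition Bv :: "'b set \<Rightarrow> ('b \<Rightarrow> 'c \<Rightarrow> bool) \<Rightarrow> ('b \<Rightarrow> real) \<Rightarrow> 'c \<Rightarrow> real" where
  "Bv S R f G = (\<Sum>F\<in>{F\<in>S. R F G}. f F)"
definition cc :: "'c set \<Rightarrow> ('b \<Rightarrow> 'c \<Rightarrow> bool) \<Rightarrow> 'b \<Rightarrow> 'b \<Rightarrow> real" where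
  "cc T R F F' = (\<Sum>G\<in>T. if R F G \<and> R F' G then 1 else 0)"

lemma inner_lemma:
  assumes S: "finite S" and T: "finite T"
    and L: "\<And>F. F\<in>S \<Longrightarrow> L F = (\<Sum>F'\<in>S. cc T R F F' * f F')"
  shows "(\<Sum>F\<in>S. g F * L F) = (\<Sum>G\<in>T. Bv S R g G * Bv S R f G)"
proof -
  have "(\<Sum>F\<in>S. g F * L F) = (\<Sum>F\<in>S. \<Sum>F'\<in>S. \<Sum>G\<in>T. if R F G \<and> R F' G then g F * f F' else 0)"
  proof (rule sum.cong[OF refl])
    fix F assume F: "F \<in> S"
    have "g F * L F = g F * (\<Sum>F'\<in>S. \<Sum>G\<in>T. if R F G \<and> R F' G then f F' else 0)"
      unfolding L[OF F] cc_def sum_distrib_right by (intro arg_cong[where f="\<lambda>x. g F * x"] sum.cong refl) simp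
    also have "\<dots> = (\<Sum>F'\<in>S. \<Sum>G\<in>T. g F * (if R F G \<and> R F' G then f F' else 0))"
      by (simp add: sum_distrib_left)
    also have "\<dots> = (\<Sum>F'\<in>S. \<Sum>G\<in>T. if R F G \<and> R F' G then g F * f F' else 0)"
      by (intro sum.cong refl) simp
    finally show "g F * L F = (\<Sum>F'\<in>S. \<Sum>G\<in>T. if R F G \<and> R F' G then g F * f F' else 0)" .
  qed
  also have "\<dots> = (\<Sum>F\<in>S. \<Sum>G\<in>T. \<Sum>F'\<in>S. if R F G \<and> R F' G then g F * f F' else 0)"
    by (rule sum.cong, simp, rule sum.swap)
  also have "\<dots> = (\<Sum>G\<in>T. \<Sum>F\<in>S. \<Sum>F'\<in>S. if R F G \<and> R F' G then g F * f F' else 0)"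
    by (rule sum.swap)
  also have "\<dots> = (\<Sum>G\<in>T. Bv S R g G * Bv S R f G)"
  proof (rule sum.cong[OF refl])
    fix G assume G: "G \<in> T"
    have "Bv S R g G * Bv S R f G = (\<Sum>F\<in>S. if R F G then g F else 0) * (\<Sum>F'\<in>S. if R F' G then f F' else 0)"
      unfolding Bv_def using S by (simp add: sum.inter_filter)
    also have "\<dots> = (\<Sum>F\<in>S. \<Sum>F'\<in>S. (if R F G then g F else 0) * (if R F' G then f F' else 0))"
      by (rule sum_product)
    also have "\<dots> = (\<Sum>F\<in>S. \<Sum>F'\<in>S. if R F G \<and> R F' G then g F * f F' else 0)"
      by (intro sum.cong refl) simp
    finally show "(\<Sum>F\<in>S. \<Sum>F'\<in>S. if R F G \<and> R F' G then g F * f F' else 0) = Bv S R g G * Bv S R f G" by simp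
  qed
  finally show ?thesis .
qed

lemma finite_eigs:
  fixes S :: "'b set" and T :: "'c set"
  assumes S: "finite S"
    and L: "\<And>f F. F\<in>S \<Longrightarrow> L f F = (\<Sum>F'\<in>S. cc T R F F' * f F')"
  shows "finite {\<mu>. \<exists>f. (\<exists>F\<in>S. f F \<noteq> 0) \<and> (\<forall>F\<in>S. L f F = \<mu> * f F)}"
proof -
  define N where "N = card S"
  obtain e where e: "bij_betw e {0..<N} S" using ex_bij_betw_nat_finite[OF S] N_def by blast
  define A where "A = mat N N (\<lambda>(a,b). cc T R (e a) (e b))"
  have A: "A \<in> carrier_mat N N" by (simp add: A_def)
  have "{\<mu>. \<exists>f. (\<exists>F\<in>S. f F \<noteq> 0) \<and> (\<forall>F\<in>S. L f F = \<mu> * f F)} \<subseteq> spectrum A"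
  proof
    fix \<mu> assume "\<mu> \<in> {\<mu>. \<exists>f. (\<exists>F\<in>S. f F \<noteq> 0) \<and> (\<forall>F\<in>S. L f F = \<mu> * f F)}"
    then obtain f F0 where F0: "F0 \<in> S" "f F0 \<noteq> 0" and ev: "\<forall>F\<in>S. L f F = \<mu> * f F" by auto
    define v where "v = vec N (\<lambda>a. f (e a))"
    have v: "v \<in> carrier_vec N" by (simp add: v_def)
    obtain a0 where a0: "a0 < N" "e a0 = F0" using e F0 unfolding bij_betw_def by auto
    have "v \<noteq> 0\<^sub>v N"
    proof
      assume "v = 0\<^sub>v N"
      hence "v $ a0 = 0" using a0 by simp
      thus False using a0 F0 by (simp add: v_def)
    qed
    moreover have "A *\<^sub>v v = \<mu> \<cdot>\<^sub>v v"
    proof (rule eq_vecI)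
      fix a assume a: "a < dim_vec (\<mu> \<cdot>\<^sub>v v)"
      hence a': "a < N" by (simp add: v_def)
      have ea: "e a \<in> S" using e a' unfolding bij_betw_def by auto
      have "(A *\<^sub>v v) $ a = (\<Sum>b\<in>{0..<N}. cc T R (e a) (e b) * f (e b))"
        using a' by (simp add: A_def v_def scalar_prod_def)
      also have "\<dots> = (\<Sum>F'\<in>S. cc T R (e a) F' * f F')"
        using sum.reindex_bij_betw[OF e, of "\<lambda>F'. cc T R (e a) F' * f F'"] by simp
      also have "\<dots> = \<mu> * f (e a)" by (metis L ea ev)
      finally show "(A *\<^sub>v v) $ a = (\<mu> \<cdot>\<^sub>v v) $ a" using a' by (simp add: v_def)
    qed (simp add: A_def v_def)
    ultimately have "eigenvector A v \<mu>" unfolding eigenvector_def using v A by simp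
    thus "\<mu> \<in> spectrum A" unfolding spectrum_def eigenvalue_def by auto
  qed
  thus ?thesis using card_finite_spectrum(1)[OF A] finite_subset by blast
qed

lemma Bv_lin: "Bv S R (\<lambda>F. x F + t * y F) G = Bv S R x G + t * Bv S R y G"
  unfolding Bv_def by (simp add: sum.distrib sum_distrib_left)

lemma Bv_scale: "Bv S R (\<lambda>F. c * y F) G = c * Bv S R y G"
  unfolding Bv_def by (simp add: sum_distrib_left)

lemma sq_expand: fixes x y :: "'c \<Rightarrow> real" and t :: real shows "(\<Sum>G\<in>T. (x G + t * y G)^2) = (\<Sum>G\<in>T. (x G)^2) + 2 * t * (\<Sum>G\<in>T. y G * x G) + t^2 * (\<Sum>G\<in>T. (y G)^2)"
proof -
  have "(\<Sum>G\<in>T. (x G + t * y G)^2) = (\<Sum>G\<in>T. (x G)^2 + 2 * t * (y G * x G) + t^2 * (y G)^2)"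
    by (intro sum.cong refl) (simp add: power2_eq_square algebra_simps)
  thus ?thesis by (simp add: sum.distrib sum_distrib_left)
qed

lemma ident1: fixes X Y M a t Q :: real assumes "X - M*Y = a"
  shows "2*t*a + t^2*(Q - M*a) = (M + 2*t*X + t^2*Q) - M*(1 + 2*t*Y + t^2*a)"
proof -
  have X: "X = a + M*Y" using assms by simp
  show ?thesis unfolding X by (simp add: algebra_simps)
qed

lemma ident2: fixes g l f M :: real assumes "g = l - M*f" shows "g*l - M*(g*f) = g^2"
  unfolding assms by (simp add: power2_eq_square algebra_simps)

lemma quad_nonpos:
  fixes a c :: real
  assumes "\<And>t. 2 * t * a + t^2 * c \<le> 0" and "a \<ge> 0"
  shows "a = 0"
proof (rule ccontr)
  assume "a \<noteq> 0" hence a: "a > 0" using assms(2) by simp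
  define t where "t = a / (\<bar>c\<bar> + 1)"
  have t: "t > 0" using a by (simp add: t_def)
  have "t * \<bar>c\<bar> < a" using a unfolding t_def by (simp add: field_simps)
  hence "t * (t * \<bar>c\<bar>) \<le> t * a" using t by simp
  moreover have "t^2 * c \<ge> - (t * (t * \<bar>c\<bar>))"
  proof -
    have "(t*t) * (-\<bar>c\<bar>) \<le> (t*t) * c" by (rule mult_left_mono) (auto simp: t)
    thus ?thesis by (simp add: power2_eq_square)
  qed
  ultimately have "2 * t * a + t^2 * c \<ge> t * a" by linarith
  moreover have "t * a > 0" using t a by simp
  ultimately show False using assms(1)[of t] by linarith
qed

lemma rayleigh:
  fixes S :: "'b set" and T :: "'c set" and L :: "('b \<Rightarrow> real) \<Rightarrow> 'b \<Rightarrow> real"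
  assumes S: "finite S" and T: "finite T" and Sne: "S \<noteq> {}"
    and L: "\<And>f F. F\<in>S \<Longrightarrow> L f F = (\<Sum>F'\<in>S. cc T R F F' * f F')"
  shows "\<exists>M. M \<in> {\<mu>. \<exists>f. (\<exists>F\<in>S. f F \<noteq> 0) \<and> (\<forall>F\<in>S. L f F = \<mu> * f F)}
     \<and> (\<forall>h. (\<Sum>G\<in>T. (Bv S R h G)^2) \<le> M * (\<Sum>F\<in>S. (h F)^2))"
proof -
  define q where "q h = (\<Sum>G\<in>T. (Bv S R h G)^2)" for h
  define n2 where "n2 h = (\<Sum>F\<in>S. (h F)^2)" for h :: "'b \<Rightarrow> real"
  define Sph where "Sph = {f. (\<forall>F. F \<notin> S \<longrightarrow> f F = 0) \<and> n2 f = 1}"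
  define Box where "Box = PiE UNIV (\<lambda>F. if F\<in>S then {-1..1} else {0::real})"
  have cBox: "compact Box"
    using compactin_PiE[of "\<lambda>_. euclidean" UNIV "(\<lambda>F. if F\<in>(S::'b set) then {-1..1::real} else {0})"]
    by (auto simp: euclidean_product_topology Box_def)
  have contn2: "continuous_on UNIV n2" unfolding n2_def
    by (intro continuous_intros continuous_on_product_coordinates)
  have contq: "continuous_on UNIV q" unfolding q_def Bv_def
    by (intro continuous_intros continuous_on_product_coordinates)
  have cl1: "closed {f::'b\<Rightarrow>real. \<forall>F. F \<notin> S \<longrightarrow> f F = 0}"
  proof (rule closed_Collect_all)
    fix F show "closed {f::'b\<Rightarrow>real. F \<notin> S \<longrightarrow> f F = 0}"
      by (cases "F \<in> S") (simp_all add: closed_Collect_eq continuous_on_product_coordinates)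
  qed
  have cl2: "closed {f. n2 f = 1}" by (rule closed_Collect_eq[OF contn2]) simp
  have "Sph = {f::'b\<Rightarrow>real. \<forall>F. F \<notin> S \<longrightarrow> f F = 0} \<inter> {f. n2 f = 1}" unfolding Sph_def by auto
  hence clS: "closed Sph" using cl1 cl2 by auto
  have sub: "Sph \<subseteq> Box"
  proof
    fix f assume f: "f \<in> Sph"
    have "\<bar>f F\<bar> \<le> 1" if "F \<in> S" for F
    proof -
      have "(f F)^2 \<le> n2 f" unfolding n2_def by (rule member_le_sum[OF that]) (auto simp: S)
      thus ?thesis using f unfolding Sph_def by (simp add: abs_square_le_1)
    qed
    thus "f \<in> Box" using f unfolding Box_def Sph_def by (auto simp: PiE_iff abs_le_iff)
  qed
  have cSph: "compact Sph"
  proof -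
    have "compact (Box \<inter> Sph)" using cBox clS by auto
    thus ?thesis using sub by (simp add: Int_absorb1)
  qed
  obtain F0 where F0: "F0 \<in> S" using Sne by auto
  have d: "(\<Sum>F\<in>S. (if F = F0 then 1 else 0::real)^2) = (\<Sum>F\<in>S. if F = F0 then 1 else 0)"
    by (intro sum.cong refl) simp
  also have "\<dots> = 1" using F0 S by simp
  finally have d: "(\<Sum>F\<in>S. (if F = F0 then 1 else 0::real)^2) = 1" .
  have "(\<lambda>F. if F = F0 then 1 else 0::real) \<in> Sph"
    unfolding Sph_def n2_def using F0 d by simp
  hence Sphne: "Sph \<noteq> {}" by auto
  obtain f0 where f0: "f0 \<in> Sph" and f0max: "\<And>y. y \<in> Sph \<Longrightarrow> q y \<le> q f0"
    using continuous_attains_sup[OF cSph Sphne continuous_on_subset[OF contq]] by blast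
  define M where "M = q f0"
  have qnn: "q h \<ge> 0" for h unfolding q_def by (simp add: sum_nonneg)
  have qscale: "q (\<lambda>F. c * h F) = c^2 * q h" for c h
    unfolding q_def Bv_scale by (simp add: power_mult_distrib sum_distrib_left)
  have n2scale: "n2 (\<lambda>F. c * h F) = c^2 * n2 h" for c h
    unfolding n2_def by (simp add: power_mult_distrib sum_distrib_left)
  have qres: "q (\<lambda>F. if F \<in> S then h F else 0) = q h" for h
    unfolding q_def Bv_def by (intro sum.cong refl arg_cong[where f="\<lambda>x. x^2"]) auto
  have n2res: "n2 (\<lambda>F. if F \<in> S then h F else 0) = n2 h" for h
    unfolding n2_def by (intro sum.cong refl) auto
  have claimA: "q h \<le> M * n2 h" for h
  proof (cases "n2 h = 0")
    case True
    hence "\<forall>F\<in>S. (h F)^2 = 0" unfolding n2_def using S by (simp add: sum_nonneg_eq_0_iff)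
    hence "\<forall>G. Bv S R h G = 0" unfolding Bv_def by simp
    hence "q h = 0" unfolding q_def by simp
    thus ?thesis using True by simp
  next
    case False
    have "n2 h \<ge> 0" unfolding n2_def by (simp add: sum_nonneg)
    hence n2pos: "n2 h > 0" using False by linarith
    define s where "s = sqrt (n2 h)"
    have s: "s > 0" "s^2 = n2 h" using n2pos by (auto simp: s_def)
    define u where "u = (\<lambda>F. (1/s) * (if F \<in> S then h F else 0))"
    have "n2 u = (1/s)^2 * n2 h" unfolding u_def n2scale n2res ..
    hence "n2 u = 1" using s False by (simp add: power_divide)
    hence "u \<in> Sph" unfolding Sph_def u_def by auto
    hence "q u \<le> M" using f0max M_def by simp
    moreover have "q u = (1/s)^2 * q h" unfolding u_def qscale qres ..
    moreover have "(1/s)^2 * q h = q h / n2 h" using s by (simp add: power_divide)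
    ultimately have "q h / n2 h \<le> M" by simp
    thus ?thesis using n2pos by (simp add: pos_divide_le_eq mult.commute)
  qed
  define g where "g F = L f0 F - M * f0 F" for F
  define a where "a = n2 g"
  have inner: "(\<Sum>F\<in>S. g F * L f0 F) = (\<Sum>G\<in>T. Bv S R g G * Bv S R f0 G)"
    by (rule inner_lemma[OF S T L])
  have aeq: "(\<Sum>G\<in>T. Bv S R g G * Bv S R f0 G) - M * (\<Sum>F\<in>S. g F * f0 F) = a"
  proof -
    have "(\<Sum>F\<in>S. g F * L f0 F) - M * (\<Sum>F\<in>S. g F * f0 F) = (\<Sum>F\<in>S. g F * L f0 F - M * (g F * f0 F))"
      by (simp add: sum_subtractf sum_distrib_left)
    also have "\<dots> = (\<Sum>F\<in>S. (g F)^2)"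
      by (intro sum.cong refl ident2) (simp add: g_def)
    finally show ?thesis unfolding inner[symmetric] a_def n2_def .
  qed
  have "2 * t * a + t^2 * (q g - M * a) \<le> 0" for t
  proof -
    have "q (\<lambda>F. f0 F + t * g F) \<le> M * n2 (\<lambda>F. f0 F + t * g F)" by (rule claimA)
    moreover have "q (\<lambda>F. f0 F + t * g F) = q f0 + 2 * t * (\<Sum>G\<in>T. Bv S R g G * Bv S R f0 G) + t^2 * q g"
      unfolding q_def Bv_lin by (rule sq_expand)
    moreover have "n2 (\<lambda>F. f0 F + t * g F) = n2 f0 + 2 * t * (\<Sum>F\<in>S. g F * f0 F) + t^2 * n2 g"
      unfolding n2_def by (rule sq_expand)
    moreover have "n2 f0 = 1" using f0 unfolding Sph_def by simp
    ultimately have "M + 2 * t * (\<Sum>G\<in>T. Bv S R g G * Bv S R f0 G) + t^2 * q g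
        \<le> M * (1 + 2 * t * (\<Sum>F\<in>S. g F * f0 F) + t^2 * a)" unfolding M_def a_def by simp
    moreover have "2 * t * a + t^2 * (q g - M * a) = (M + 2 * t * (\<Sum>G\<in>T. Bv S R g G * Bv S R f0 G) + t^2 * q g)
        - M * (1 + 2 * t * (\<Sum>F\<in>S. g F * f0 F) + t^2 * a)"
      by (rule ident1[OF aeq])
    ultimately show ?thesis by linarith
  qed
  moreover have "a \<ge> 0" unfolding a_def n2_def by (simp add: sum_nonneg)
  ultimately have "a = 0" by (rule quad_nonpos)
  hence "\<forall>F\<in>S. (g F)^2 = 0" unfolding a_def n2_def using S by (simp add: sum_nonneg_eq_0_iff)
  hence ev: "\<forall>F\<in>S. L f0 F = M * f0 F" unfolding g_def by simp
  have nz: "\<exists>F\<in>S. f0 F \<noteq> 0"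
  proof (rule ccontr)
    assume "\<not> ?thesis"
    hence "n2 f0 = 0" unfolding n2_def by simp
    thus False using f0 unfolding Sph_def by simp
  qed
  have Mm: "M \<in> {\<mu>. \<exists>f. (\<exists>F\<in>S. f F \<noteq> 0) \<and> (\<forall>F\<in>S. L f F = \<mu> * f F)}"
    unfolding mem_Collect_eq by (rule exI[of _ f0]) (use nz ev in simp)
  show ?thesis
  proof (intro exI[of _ M] conjI allI Mm)
    fix h show "(\<Sum>G\<in>T. (Bv S R h G)^2) \<le> M * (\<Sum>F\<in>S. (h F)^2)"
      using claimA[of h] unfolding q_def n2_def .
  qed
qed

lemma sum_ind: "finite T \<Longrightarrow> (\<Sum>G\<in>T. if P G then 1 else 0::real) = real (card {G\<in>T. P G})"
  by (simp add: sum.inter_filter[symmetric])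

lemma union_eq:
  assumes "F \<noteq> F'" "card F = k" "card F' = k" "F \<union> F' \<subseteq> G" "finite G" "card G = Suc k"
  shows "G = F \<union> F'"
proof -
  have fin: "finite (F \<union> F')" using assms(4,5) finite_subset by blast
  have "\<not> F' \<subseteq> F"
  proof
    assume "F' \<subseteq> F"
    moreover have "finite F" using fin by simp
    ultimately have "F' = F" using assms(2,3) card_subset_eq by metis
    thus False using assms(1) by simp
  qed
  hence ps: "F \<subset> F \<union> F'" by blast
  have "card F < card (F \<union> F')" by (rule psubset_card_mono[OF fin ps])
  hence c1: "card G \<le> card (F \<union> F')" using assms(2,6) by simp
  have c2: "card (F \<union> F') \<le> card G" by (rule card_mono[OF assms(5) assms(4)])
  have "card (F \<union> F') = card G" using c1 c2 by (rule antisym[rotated])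
  hence "F \<union> F' = G" by (rule card_subset_eq[OF assms(5) assms(4)])
  thus ?thesis by (rule sym)
qed

lemma Lcoef:
  assumes sc: "simplicial_complex V K" and F: "F \<in> faces K i"
  shows "signless_up_laplacian K i f F
     = (\<Sum>F'\<in>faces K i. cc (faces K (i+1)) (\<subseteq>) F F' * f F')"
proof -
  let ?S = "faces K i" and ?T = "faces K (i+1)"
  have finK: "finite K" using sc unfolding simplicial_complex_def by (meson finite_Pow_iff finite_subset)
  have finS: "finite ?S" and finT: "finite ?T" using finK unfolding faces_def by auto
  have closed: "\<And>A B. A \<in> K \<Longrightarrow> B \<subseteq> A \<Longrightarrow> B \<in> K" using sc unfolding simplicial_complex_def by blast
  have cFF: "cc ?T (\<subseteq>) F F = real (updeg K i F)"
    unfolding cc_def updeg_def using sum_ind[OF finT, of "\<lambda>G. F \<subseteq> G"] by simp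
  have cFF': "cc ?T (\<subseteq>) F F' = (if F' \<in> up_neighbors K i F then 1 else 0)" if F': "F' \<in> ?S - {F}" for F'
  proof -
    have cc: "cc ?T (\<subseteq>) F F' = real (card {G\<in>?T. F \<subseteq> G \<and> F' \<subseteq> G})"
      unfolding cc_def using sum_ind[OF finT, of "\<lambda>G. F \<subseteq> G \<and> F' \<subseteq> G"] by simp
    have eqG: "G = F \<union> F'" if "G \<in> ?T" "F \<union> F' \<subseteq> G" for G
    proof (rule union_eq[of F F' "i+1"])
      show "F \<noteq> F'" using F' by auto
      show "card F = i+1" using F unfolding faces_def by auto
      show "card F' = i+1" using F' unfolding faces_def by auto
      show "F \<union> F' \<subseteq> G" by fact
      have "card G = i + 2" using that unfolding faces_def by auto
      thus "finite G" "card G = Suc (i+1)" by (auto intro: card_ge_0_finite)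
    qed
    show ?thesis
    proof (cases "F \<union> F' \<in> ?T")
      case True
      have E: "{G\<in>?T. F \<subseteq> G \<and> F' \<subseteq> G} = {F \<union> F'}"
      proof (intro equalityI subsetI)
        fix G assume "G \<in> {G\<in>?T. F \<subseteq> G \<and> F' \<subseteq> G}"
        hence "G \<in> ?T" "F \<union> F' \<subseteq> G" by auto
        thus "G \<in> {F \<union> F'}" using eqG by simp
      next
        fix G assume "G \<in> {F \<union> F'}"
        thus "G \<in> {G\<in>?T. F \<subseteq> G \<and> F' \<subseteq> G}" using True by simp
      qed
      have nU: "F' \<in> up_neighbors K i F" unfolding up_neighbors_def using True F' by simp
      show ?thesis unfolding cc E using nU by simp
    next
      case False
      have E: "{G\<in>?T. F \<subseteq> G \<and> F' \<subseteq> G} = {}"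
      proof (intro equalityI subsetI)
        fix G assume "G \<in> {G\<in>?T. F \<subseteq> G \<and> F' \<subseteq> G}"
        hence "G \<in> ?T" "F \<union> F' \<subseteq> G" by auto
        hence "F \<union> F' \<in> ?T" using eqG by metis
        thus "G \<in> {}" using False by simp
      qed simp
      have nU: "F' \<notin> up_neighbors K i F" unfolding up_neighbors_def using False by simp
      show ?thesis unfolding cc E using nU by simp
    qed
  qed
  have "(\<Sum>F'\<in>?S. cc ?T (\<subseteq>) F F' * f F') = cc ?T (\<subseteq>) F F * f F + (\<Sum>F'\<in>?S - {F}. cc ?T (\<subseteq>) F F' * f F')"
    by (rule sum.remove[OF finS F])
  also have "(\<Sum>F'\<in>?S - {F}. cc ?T (\<subseteq>) F F' * f F') = (\<Sum>F'\<in>?S - {F}. if F' \<in> up_neighbors K i F then f F' else 0)"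
  proof (rule sum.cong[OF refl])
    fix F' assume F': "F' \<in> ?S - {F}"
    show "cc ?T (\<subseteq>) F F' * f F' = (if F' \<in> up_neighbors K i F then f F' else 0)"
      unfolding cFF'[OF F'] by simp
  qed
  also have "\<dots> = (\<Sum>F'\<in>{F'\<in>?S - {F}. F' \<in> up_neighbors K i F}. f F')"
    by (rule sum.inter_filter[symmetric]) (use finS in auto)
  also have "{F'\<in>?S - {F}. F' \<in> up_neighbors K i F} = up_neighbors K i F"
    unfolding up_neighbors_def by auto
  finally show ?thesis unfolding signless_up_laplacian_def cFF by simp
qed

theorem mainTheorem1:
  fixes V :: "'a set" and K :: "'a set set" and i n :: nat
  assumes "simplicial_complex V K"
    and "card V = n"
    and "pure_of_dim K (i + 1)"
    and "\<forall>F. F \<subseteq> V \<and> card F = i + 1 \<longrightarrow> F \<in> K"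
  shows "real (card (faces K (i + 1)))
           \<le> q_up K i * real (n choose (i + 1)) / (real i + 2) ^ 2"
proof -
  note sc = assms(1)
  let ?S = "faces K i" and ?T = "faces K (i+1)"
  have finV: "finite V" and KV: "K \<subseteq> Pow V" using sc unfolding simplicial_complex_def by auto
  have finK: "finite K" using finV KV by (meson finite_Pow_iff finite_subset)
  have finS: "finite ?S" and finT: "finite ?T" using finK unfolding faces_def by auto
  have closed: "\<And>A B. A \<in> K \<Longrightarrow> B \<subseteq> A \<Longrightarrow> B \<in> K" using sc unfolding simplicial_complex_def by blast
  have L: "\<And>f F. F \<in> ?S \<Longrightarrow> signless_up_laplacian K i f F = (\<Sum>F'\<in>?S. cc ?T (\<subseteq>) F F' * f F')"
    by (rule Lcoef[OF sc])
  have "\<exists>F\<in>K. card F = i + 1 + 1" using assms(3) unfolding pure_of_dim_def by (rule conjunct1)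
  then obtain G0 where G0: "G0 \<in> K" "card G0 = i + 2" by auto
  have fG0: "finite G0" by (rule card_ge_0_finite) (use G0(2) in simp)
  have "G0 \<noteq> {}" using G0(2) by auto
  then obtain x where x: "x \<in> G0" by blast
  have "G0 - {x} \<in> K" by (rule closed[OF G0(1)]) auto
  moreover have "card (G0 - {x}) = i + 1" using G0(2) x fG0 by simp
  ultimately have "G0 - {x} \<in> ?S" unfolding faces_def by simp
  hence Sne: "?S \<noteq> {}" by auto
  have ex: "\<exists>M. M \<in> up_eigenvalues K i \<and> (\<forall>h. (\<Sum>G\<in>?T. (Bv ?S (\<subseteq>) h G)^2) \<le> M * (\<Sum>F\<in>?S. (h F)^2))"
    unfolding up_eigenvalues_def by (rule rayleigh[OF finS finT Sne L])
  then obtain M where M: "M \<in> up_eigenvalues K i"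
    and bound0: "\<forall>h. (\<Sum>G\<in>?T. (Bv ?S (\<subseteq>) h G)^2) \<le> M * (\<Sum>F\<in>?S. (h F)^2)"
    by (elim exE conjE) (rule that)
  note bound = spec[OF bound0]
  have fin: "finite (up_eigenvalues K i)"
    unfolding up_eigenvalues_def by (rule finite_eigs[OF finS L])
  have Mq: "M \<le> q_up K i" unfolding q_up_def by (rule Max_ge[OF fin M])
  have SV: "?S = {F. F \<subseteq> V \<and> card F = i + 1}"
    using KV assms(4) unfolding faces_def by blast
  have cardS: "card ?S = n choose (i+1)" unfolding SV using n_subsets[OF finV] assms(2) by simp
  have BvG: "Bv ?S (\<subseteq>) (\<lambda>_. 1) G = real i + 2" if G: "G \<in> ?T" for G
  proof -
    have GK: "G \<in> K" and cG: "card G = i + 2" using G unfolding faces_def by auto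
    have fG: "finite G" using cG by (auto intro: card_ge_0_finite)
    have "{F \<in> ?S. F \<subseteq> G} = {F. F \<subseteq> G \<and> card F = i + 1}"
      using closed[OF GK] unfolding faces_def by blast
    hence "card {F \<in> ?S. F \<subseteq> G} = (i+2) choose (i+1)" using n_subsets[OF fG] cG by simp
    also have "\<dots> = i + 2" using binomial_Suc_n[of "i+1"] by (simp add: numeral_2_eq_2)
    finally show ?thesis unfolding Bv_def by simp
  qed
  have "(\<Sum>G\<in>?T. (Bv ?S (\<subseteq>) (\<lambda>_. 1) G)^2) = (\<Sum>G\<in>?T. (real i + 2)^2)"
    by (rule sum.cong[OF refl]) (simp only: BvG)
  hence "(\<Sum>G\<in>?T. (Bv ?S (\<subseteq>) (\<lambda>_. 1) G)^2) = real (card ?T) * (real i + 2)^2" by simp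
  moreover have "(\<Sum>F\<in>?S. ((\<lambda>_. 1::real) F)^2) = real (n choose (i+1))" using cardS by simp
  ultimately have "real (card ?T) * (real i + 2)^2 \<le> M * real (n choose (i+1))"
    using bound[of "\<lambda>_. 1"] by simp
  also have "\<dots> \<le> q_up K i * real (n choose (i+1))" using Mq by (simp add: mult_right_mono)
  finally have fin2: "real (card ?T) * (real i + 2)^2 \<le> q_up K i * real (n choose (i+1))" .
  have pos: "(real i + 2)^2 > 0" by simp
  show ?thesis using fin2 by (simp only: pos_le_divide_eq[OF pos])
qed

end
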